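(* Let $q$ be a prime power and $\eta\ge2$, $(\delta_T,\delta_X)\in\mathbb{Z}\times\mathbb{N}$ with $\delta_T<0$, $\eta\mid\delta_T$ and $q\le\delta/\eta$, where $\delta=\delta_T+\eta\delta_X$. Write $\delta/\eta=k(q-1)+r$ with $k\in\mathbb{N}$ and $r\in\{1,\dots,q-1\}$. Then the polynomial \[F_0=X_1^{-\delta_T/\eta}X_2^{\delta/\eta}-T_1^{\eta k(q-1)}X_1^{k(q-1)-\delta_T/\eta}X_2^{r}+T_1^{(\eta k-1)(q-1)}T_2^{q-1}X_1^{k(q-1)-\delta_T/\eta}X_2^{r}-T_2^{\eta k(q-1)}X_1^{k(q-1)-\delta_T/\eta}X_2^{r}\] lies in the kernel of $\mathrm{ev}_{(\delta_T,\delta_X)}$, i.e. it vanishes at every $\mathbb{F}_q$-rational point of $\mathcal{H}_\eta$.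
   Context: $R=\mathbb{F}_q[T_1,T_2,X_1,X_2]$; the bidegree of $T_1^{c_1}T_2^{c_2}X_1^{d_1}X_2^{d_2}$ is $(c_1+c_2-\eta d_1,d_1+d_2)$ ($F_0$ has bidegree $(\delta_T,\delta_X)$). The Hirzebruch surface $\mathcal{H}_\eta$ is the quotient of $(\mathbb{A}^2\setminus\{0\})^2$ by $\mathbb{G}_m^2$ acting by $(\lambda,\mu)\cdot(t_1,t_2,x_1,x_2)=(\lambda t_1,\lambda t_2,\mu\lambda^{-\eta}x_1,\mu x_2)$; each of its $\mathbb{F}_q$-points has a unique representative of the form $(1,a,1,b)$, $(0,1,1,b)$, $(1,a,0,1)$ or $(0,1,0,1)$ ($a,b\in\mathbb{F}_q$), where polynomials are evaluated; $\mathrm{ev}_{(\delta_T,\delta_X)}$ maps a bidegree-$(\delta_T,\delta_X)$ polynomial to its vector of values at these points. *)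

theory Defs
  imports Main
begin

text \<open>Representatives of the F_q-rational points of the Hirzebruch surface H_eta:
  (1,a,1,b), (0,1,1,b), (1,a,0,1), (0,1,0,1) with a, b in F_q.\<close>
definition hirzebruch_points :: "('a::field \<times> 'a \<times> 'a \<times> 'a) set" where
  "hirzebruch_points =
     {(1, a, 1, b) | a b. True} \<union> {(0, 1, 1, b) | b. True} \<union>
     {(1, a, 0, 1) | a. True} \<union> {(0, 1, 0, 1)}"

text \<open>Here -delta_T/eta and delta/eta = delta_T/eta + delta_X
  are exact integer quotients (eta divides delta_T).\<close>
definition F0_eval ::
  "nat \<Rightarrow> nat \<Rightarrow> int \<Rightarrow> nat \<Rightarrow> nat \<Rightarrow> nat \<Rightarrow> 'a::comm_ring_1 \<Rightarrow> 'a \<Rightarrow> 'a \<Rightarrow> 'a \<Rightarrow> 'a" where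
  "F0_eval q \<eta> \<delta>T \<delta>X k r t1 t2 x1 x2 =
     (let a = nat (- \<delta>T div int \<eta>);
          D = nat ((\<delta>T + int \<eta> * int \<delta>X) div int \<eta>);
          e = k * (q - 1) + a
      in x1 ^ a * x2 ^ D
         - t1 ^ (\<eta> * k * (q - 1)) * x1 ^ e * x2 ^ r
         + t1 ^ ((\<eta> * k - 1) * (q - 1)) * t2 ^ (q - 1) * x1 ^ e * x2 ^ r
         - t2 ^ (\<eta> * k * (q - 1)) * x1 ^ e * x2 ^ r)"

end

theory Submission
  imports Defs
begin

lemma ff_pow_unit:
  fixes x :: "'a::{finite,field}"
  assumes "x \<noteq> 0"
  shows "x ^ (card (UNIV :: 'a set) - 1) = 1"
proof -
  let ?S = "UNIV - {0::'a}"
  have cS: "card ?S = card (UNIV :: 'a set) - 1" by (simp add: card_Diff_singleton)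
  have im: "(\<lambda>y. x * y) ` ?S = ?S"
  proof
    show "(\<lambda>y. x * y) ` ?S \<subseteq> ?S" using assms by auto
    show "?S \<subseteq> (\<lambda>y. x * y) ` ?S"
    proof
      fix z assume "z \<in> ?S"
      then have "z = x * (z / x)" "z / x \<in> ?S" using assms by auto
      then show "z \<in> (\<lambda>y. x * y) ` ?S" by blast
    qed
  qed
  have inj: "inj_on (\<lambda>y. x * y) ?S" using assms by (auto simp: inj_on_def)
  have "prod id ?S = prod id ((\<lambda>y. x * y) ` ?S)" using im by simp
  also have "\<dots> = prod (\<lambda>y. x * y) ?S" using prod.reindex[OF inj, of id] by simp
  also have "\<dots> = x ^ card ?S * prod id ?S" by (simp add: prod.distrib)
  finally have "x ^ card ?S * prod id ?S = 1 * prod id ?S" by simp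
  moreover have "prod id ?S \<noteq> 0" by (simp add: prod_zero_iff)
  ultimately show ?thesis using cS by simp
qed

lemma ff_pow_red:
  fixes x :: "'a::{finite,field}"
  assumes "1 \<le> r"
  shows "x ^ (m * (card (UNIV :: 'a set) - 1) + r) = x ^ r"
proof (cases "x = 0")
  case True then show ?thesis using assms by (simp add: power_0_left)
next
  case False
  have u: "x ^ (card (UNIV :: 'a set) - 1) = 1" by (rule ff_pow_unit[OF False])
  show ?thesis
    by (simp only: power_add mult.commute[of m] power_mult u power_one mult_1)
qed

lemma ff_pow_mult:
  fixes x :: "'a::{finite,field}"
  assumes "1 \<le> m"
  shows "x ^ (m * (card (UNIV :: 'a set) - 1)) = x ^ (card (UNIV :: 'a set) - 1)"
proof (cases "x = 0")
  case True
  have "card (UNIV :: 'a set) \<ge> 2"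
  proof -
    have "{0::'a, 1} \<subseteq> UNIV" by simp
    then have "card {0::'a,1} \<le> card (UNIV::'a set)" by (rule card_mono[OF finite_UNIV])
    then show ?thesis by simp
  qed
  then show ?thesis using True assms by (simp add: power_0_left)
next
  case False
  have u: "x ^ (card (UNIV :: 'a set) - 1) = 1" by (rule ff_pow_unit[OF False])
  show ?thesis
    by (simp only: mult.commute[of m] power_mult u power_one)
qed

theorem lemma2p15:
  fixes \<eta> :: nat and \<delta>T :: int and \<delta>X :: nat and k :: nat and r :: nat
    and q :: nat
  assumes q_def: "q = card (UNIV :: 'a::{finite,field} set)"
    and eta: "\<eta> \<ge> 2"
    and neg: "\<delta>T < 0"
    and dvd: "int \<eta> dvd \<delta>T"
    and qle: "int q \<le> (\<delta>T + int \<eta> * int \<delta>X) div int \<eta>"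
    and decomp: "(\<delta>T + int \<eta> * int \<delta>X) div int \<eta> = int (k * (q - 1) + r)"
    and r: "1 \<le> r" "r \<le> q - 1"
  shows "\<forall>(t1, t2, x1, x2) \<in> (hirzebruch_points :: ('a \<times> 'a \<times> 'a \<times> 'a) set).
           F0_eval q \<eta> \<delta>T \<delta>X k r t1 t2 x1 x2 = 0"
proof -
  define a where "a = nat (- \<delta>T div int \<eta>)"
  define D where "D = nat ((\<delta>T + int \<eta> * int \<delta>X) div int \<eta>)"
  define e where "e = k * (q - 1) + a"
  have D: "D = k * (q - 1) + r" by (simp only: D_def decomp nat_int)
  have k1: "1 \<le> k"
  proof (rule ccontr)
    assume "\<not> 1 \<le> k" then have "k = 0" by simp
    then show False using qle decomp r by simp
  qed
  obtain c where c: "\<delta>T = int \<eta> * c" using dvd by blast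
  have "c < 0" using neg c eta by (simp add: mult_less_0_iff)
  have "- \<delta>T div int \<eta> = - c"
  proof -
    have "- \<delta>T div int \<eta> = (int \<eta> * (- c)) div int \<eta>" using c by simp
    also have "\<dots> = - c" by (rule nonzero_mult_div_cancel_left) (use eta in simp)
    finally show ?thesis .
  qed
  then have a1: "1 \<le> a" using \<open>c < 0\<close> by (simp add: a_def)
  have e1: "1 \<le> e" using a1 by (simp add: e_def)
  have ek2': "2 \<le> \<eta> * k" using eta k1 by (metis mult_le_mono nat_mult_1_right)
  then have ek: "1 \<le> \<eta> * k" by linarith
  have q2: "2 \<le> q"
  proof -
    have "card {0::'a,1} \<le> card (UNIV::'a set)" by (rule card_mono[OF finite_UNIV]) simp
    then show ?thesis using q_def by simp
  qed
  from ek2' have ek2: "1 \<le> \<eta> * k - 1" by simp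
  have F: "F0_eval q \<eta> \<delta>T \<delta>X k r t1 t2 x1 x2 =
     x1 ^ a * x2 ^ D - t1 ^ (\<eta> * k * (q - 1)) * x1 ^ e * x2 ^ r
         + t1 ^ ((\<eta> * k - 1) * (q - 1)) * t2 ^ (q - 1) * x1 ^ e * x2 ^ r
         - t2 ^ (\<eta> * k * (q - 1)) * x1 ^ e * x2 ^ r" for t1 t2 x1 x2 :: 'a
    by (simp add: F0_eval_def Let_def a_def D_def e_def)
  have redD: "(b::'a) ^ D = b ^ r" for b using ff_pow_red[OF r(1), of b k] q_def D by simp
  have redk: "(b::'a) ^ (\<eta> * k * (q - 1)) = b ^ (q - 1)" for b
    using ff_pow_mult[OF ek, of b] q_def by simp
  have redk': "(b::'a) ^ (\<eta> * k * (q - Suc 0)) = b ^ (q - Suc 0)" for b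
    using redk[of b] by simp
  have z1: "(0::'a) ^ ((\<eta> * k - 1) * (q - 1)) = 0" using ek2 q2
    by (simp add: power_0_left)
  have z2: "(0::'a) ^ (\<eta> * k * (q - 1)) = 0" using ek q2
    by (simp add: power_0_left)
  have z1': "(0::'a) ^ ((\<eta> * k - Suc 0) * (q - Suc 0)) = 0" using z1 by simp
  have z2': "(0::'a) ^ (\<eta> * k * (q - Suc 0)) = 0" using z2 by simp
  have za: "(0::'a) ^ a = 0" "(0::'a) ^ e = 0" using a1 e1 by (simp_all add: power_0_left)
  show ?thesis
    unfolding hirzebruch_points_def
  proof (intro ballI)
    fix p :: "'a \<times> 'a \<times> 'a \<times> 'a"
    assume "p \<in> {(1, a, 1, b) | a b. True} \<union> {(0, 1, 1, b) | b. True} \<union>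
     {(1, a, 0, 1) | a. True} \<union> {(0, 1, 0, 1)}"
    then consider (A) a' b where "p = (1, a', 1, b)" | (B) b where "p = (0, 1, 1, b)"
      | (C) a' where "p = (1, a', 0, 1)" | (E) "p = (0, 1, 0, 1)" by blast
    then show "case p of (t1, t2, x1, x2) \<Rightarrow> F0_eval q \<eta> \<delta>T \<delta>X k r t1 t2 x1 x2 = 0"
    proof cases
      case A then show ?thesis by (simp add: F redD redk')
    next
      case B then show ?thesis by (simp add: F redD z1 z2 z1' z2')
    next
      case C then show ?thesis by (simp add: F za)
    next
      case E then show ?thesis by (simp add: F za z1 z2 z1' z2')
    qed
  qed
qed

end
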